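(* Let $(\mathcal P_1,\cdot_1,[-,-]_1)$ and $(\mathcal P_2,\cdot_2,[-,-]_2)$ be Poisson algebras, and let $\mathcal P=\mathcal P_1\otimes\mathcal P_2$ be the Poisson algebra with componentwise product $\cdot$ and Lie bracket $$[x_1\otimes y_1,x_2\otimes y_2]_\otimes=[x_1,x_2]_1\otimes(y_1\cdot_2y_2)+(x_1\cdot_1x_2)\otimes[y_1,y_2]_2 .$$ Endow $\mathcal P$ with the $n$-ary bracket $$[x_1,x_2,\dots,x_n]:=[x_1,[x_2,\dots,[x_{n-1},x_n]_\otimes\dots]_\otimes]_\otimes,\qquad x_i\in\mathcal P.$$ Let $\mathcal I$ be the ideal of the Poisson algebra $(\mathcal P,\cdot,[-,-]_\otimes)$ generated by all elements $$[x_1,\dots,x_i,\dots,x_j,\dots,x_n]+[x_1,\dots,x_j,\dots,x_i,\dots,x_n],\qquad 1\le i<j\le n,\ x_k\in\mathcal P.$$ Then the quotient $\mathcal P/\mathcal I$, with the induced product and the induced $n$-ary bracket $[\bar x_1,\dots,\bar x_n]=[x_1,\dots,x_n]+\mathcal I$, is a Poisson $n$-Lie algebra.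
   Context: A Poisson algebra is a commutative associative algebra $(\mathcal P,\cdot)$ with a Lie bracket $[-,-]$ satisfying $[x,y\cdot z]=[x,y]\cdot z+y\cdot[x,z]$. An ideal of a Poisson algebra is a subspace closed under multiplication by arbitrary elements with respect to both $\cdot$ and $[-,-]$. A Poisson $n$-Lie algebra is a commutative associative algebra with an $n$-linear skew-symmetric bracket satisfying the fundamental identity $[x_1,\dots,x_{n-1},[y_1,\dots,y_n]]=\sum_{i=1}^n[y_1,\dots,[x_1,\dots,x_{n-1},y_i],\dots,y_n]$ and the Leibniz rule $[y\cdot z,x_2,\dots,x_n]=y\cdot[z,x_2,\dots,x_n]+z\cdot[y,x_2,\dots,x_n]$. *)

theory Defs
  imports Complex_Main
begin

definition bilinear_map ::
  "('k::field \<Rightarrow> 'a::ab_group_add \<Rightarrow> 'a) \<Rightarrow> ('k \<Rightarrow> 'b::ab_group_add \<Rightarrow> 'b)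
   \<Rightarrow> ('k \<Rightarrow> 'c::ab_group_add \<Rightarrow> 'c) \<Rightarrow> ('a \<Rightarrow> 'b \<Rightarrow> 'c) \<Rightarrow> bool" where
  "bilinear_map sa sb sc f \<longleftrightarrow>
     (\<forall>x. Vector_Spaces.linear sb sc (f x)) \<and> (\<forall>y. Vector_Spaces.linear sa sc (\<lambda>x. f x y))"

definition poisson_algebra ::
  "('k::field \<Rightarrow> 'a::ab_group_add \<Rightarrow> 'a) \<Rightarrow> ('a \<Rightarrow> 'a \<Rightarrow> 'a) \<Rightarrow> ('a \<Rightarrow> 'a \<Rightarrow> 'a) \<Rightarrow> bool" where
  "poisson_algebra s mult br \<longleftrightarrow>
     vector_space s \<and>
     bilinear_map s s s mult \<and>
     (\<forall>x y z. mult (mult x y) z = mult x (mult y z)) \<and>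
     (\<forall>x y. mult x y = mult y x) \<and>
     bilinear_map s s s br \<and>
     (\<forall>x. br x x = 0) \<and>
     (\<forall>x y z. br x (br y z) + br y (br z x) + br z (br x y) = 0) \<and>
     (\<forall>x y z. br x (mult y z) = mult (br x y) z + mult y (br x z))"

text \<open>Over a field, the universal property for scalar-valued bilinear maps
  characterises the tensor product up to unique isomorphism.\<close>
definition is_tensor_product ::
  "('k::field \<Rightarrow> 'a::ab_group_add \<Rightarrow> 'a) \<Rightarrow> ('k \<Rightarrow> 'b::ab_group_add \<Rightarrow> 'b)
   \<Rightarrow> ('k \<Rightarrow> 't::ab_group_add \<Rightarrow> 't) \<Rightarrow> ('a \<Rightarrow> 'b \<Rightarrow> 't) \<Rightarrow> bool" where
  "is_tensor_product sa sb st tp \<longleftrightarrow>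
     bilinear_map sa sb st tp \<and>
     (\<forall>h. bilinear_map sa sb ((*) :: 'k \<Rightarrow> 'k \<Rightarrow> 'k) h \<longrightarrow>
        (\<exists>!g. Vector_Spaces.linear st ((*) :: 'k \<Rightarrow> 'k \<Rightarrow> 'k) g \<and> (\<forall>x y. g (tp x y) = h x y)))"

fun nbr :: "('t::zero \<Rightarrow> 't \<Rightarrow> 't) \<Rightarrow> 't list \<Rightarrow> 't" where
  "nbr br [] = 0"
| "nbr br [x] = x"
| "nbr br (x # y # ys) = br x (nbr br (y # ys))"

definition poisson_ideal ::
  "('k::field \<Rightarrow> 'a::ab_group_add \<Rightarrow> 'a) \<Rightarrow> ('a \<Rightarrow> 'a \<Rightarrow> 'a) \<Rightarrow> ('a \<Rightarrow> 'a \<Rightarrow> 'a) \<Rightarrow> 'a set \<Rightarrow> bool" where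
  "poisson_ideal s mult br J \<longleftrightarrow>
     module.subspace s J \<and>
     (\<forall>x\<in>J. \<forall>y. mult y x \<in> J \<and> mult x y \<in> J \<and> br y x \<in> J \<and> br x y \<in> J)"

definition generated_poisson_ideal ::
  "('k::field \<Rightarrow> 'a::ab_group_add \<Rightarrow> 'a) \<Rightarrow> ('a \<Rightarrow> 'a \<Rightarrow> 'a) \<Rightarrow> ('a \<Rightarrow> 'a \<Rightarrow> 'a) \<Rightarrow> 'a set \<Rightarrow> 'a set" where
  "generated_poisson_ideal s mult br S = \<Inter>{J. poisson_ideal s mult br J \<and> S \<subseteq> J}"

definition swap_generators :: "nat \<Rightarrow> ('a::ab_group_add \<Rightarrow> 'a \<Rightarrow> 'a) \<Rightarrow> 'a set" where
  "swap_generators n br =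
     {nbr br xs + nbr br (xs[i := xs ! j, j := xs ! i]) | xs i j. length xs = n \<and> i < j \<and> j < n}"

text \<open>Since quotient types cannot be
  formed inside a statement, this is expressed as: I is a subspace, the operations
  descend to T/I, and all Poisson n-Lie axioms hold modulo I.\<close>
definition quotient_is_poisson_nlie ::
  "('k::field \<Rightarrow> 't::ab_group_add \<Rightarrow> 't) \<Rightarrow> ('t \<Rightarrow> 't \<Rightarrow> 't) \<Rightarrow> ('t list \<Rightarrow> 't) \<Rightarrow> nat \<Rightarrow> 't set \<Rightarrow> bool" where
  "quotient_is_poisson_nlie s mult nb n I \<longleftrightarrow>
     module.subspace s I \<and>
     \<comment> \<open>the product descends to T/I\<close>
     (\<forall>x\<in>I. \<forall>y. mult y x \<in> I \<and> mult x y \<in> I) \<and>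
     \<comment> \<open>T/I is a commutative associative algebra\<close>
     (\<forall>c x y z. mult (s c x + y) z - (s c (mult x z) + mult y z) \<in> I) \<and>
     (\<forall>c x y z. mult z (s c x + y) - (s c (mult z x) + mult z y) \<in> I) \<and>
     (\<forall>x y z. mult (mult x y) z - mult x (mult y z) \<in> I) \<and>
     (\<forall>x y. mult x y - mult y x \<in> I) \<and>
     \<comment> \<open>the n-ary bracket descends to T/I\<close>
     (\<forall>xs ys. length xs = n \<and> length ys = n \<and> (\<forall>i<n. xs ! i - ys ! i \<in> I)
        \<longrightarrow> nb xs - nb ys \<in> I) \<and>
     \<comment> \<open>multilinearity\<close>
     (\<forall>xs i c x y. length xs = n \<and> i < n \<longrightarrow>
        nb (xs[i := s c x + y]) - (s c (nb (xs[i := x])) + nb (xs[i := y])) \<in> I) \<and>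
     \<comment> \<open>skew-symmetry\<close>
     (\<forall>xs i j. length xs = n \<and> i < j \<and> j < n \<longrightarrow>
        nb (xs[i := xs ! j, j := xs ! i]) + nb xs \<in> I) \<and>
     \<comment> \<open>fundamental identity\<close>
     (\<forall>xs ys. length xs = n - 1 \<and> length ys = n \<longrightarrow>
        nb (xs @ [nb ys]) - (\<Sum>i<n. nb (ys[i := nb (xs @ [ys ! i])])) \<in> I) \<and>
     \<comment> \<open>Leibniz rule\<close>
     (\<forall>y z xs. length xs = n - 1 \<longrightarrow>
        nb (mult y z # xs) - (mult y (nb (z # xs)) + mult z (nb (y # xs))) \<in> I)"

end

theory Submission
  imports Defs
begin


lemma vs_field: "vector_space ((*) :: 'k::field \<Rightarrow> 'k \<Rightarrow> 'k)"
  by unfold_locales (auto simp: algebra_simps)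

lemma separate:
  fixes s :: "'k::field \<Rightarrow> 't::ab_group_add \<Rightarrow> 't"
  assumes vs: "vector_space s" and v: "v \<noteq> 0"
  shows "\<exists>\<phi>. Vector_Spaces.linear s ((*) :: 'k \<Rightarrow> 'k \<Rightarrow> 'k) \<phi> \<and> \<phi> v \<noteq> 0"
proof -
  interpret vector_space_pair s "(*) :: 'k \<Rightarrow> 'k \<Rightarrow> 'k"
    using vs vs_field by (simp add: vector_space_pair_def)
  have ind: "vs1.independent {v}" using v by simp
  show ?thesis
    by (rule exI[of _ "construct {v} (\<lambda>_. 1)"])
       (simp add: linear_construct[OF ind] construct_basis[OF ind])
qed

lemma lin_zero: fixes f :: "'a::ab_group_add \<Rightarrow> 'b::ab_group_add" assumes "\<And>a b. f (a + b) = f a + f b" shows "f 0 = (0::'b::ab_group_add)"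
proof -
  have "f 0 = f 0 + f 0" using assms[of 0 0] by simp
  then show ?thesis by simp
qed

lemma lin_neg: fixes f :: "'a::ab_group_add \<Rightarrow> 'b::ab_group_add" assumes "\<And>a b. f (a + b) = f a + (f b::'b::ab_group_add)" shows "f (- a) = - f a"
proof -
  have "f a + f (- a) = 0" using assms[of a "- a"] lin_zero[of f, OF assms] by simp
  then show ?thesis by (simp add: eq_neg_iff_add_eq_0 add.commute)
qed

lemma lin_diff: fixes f :: "'a::ab_group_add \<Rightarrow> 'b::ab_group_add" assumes "\<And>a b. f (a + b) = f a + (f b::'b::ab_group_add)" shows "f (a - b) = f a - f b"
  using assms[of a "- b"] lin_neg[of f, OF assms] by simp

lemma tensor_zero:
  fixes s1 :: "'k::field \<Rightarrow> 'a::ab_group_add \<Rightarrow> 'a"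
    and s2 :: "'k \<Rightarrow> 'b::ab_group_add \<Rightarrow> 'b"
    and s :: "'k \<Rightarrow> 't::ab_group_add \<Rightarrow> 't"
    and tp :: "'a \<Rightarrow> 'b \<Rightarrow> 't"
  assumes tensor: "is_tensor_product s1 s2 s tp"
    and vs1: "vector_space s1" and vs2: "vector_space s2" and vs: "vector_space s"
    and L: "Vector_Spaces.linear s s L" and Lz: "\<And>x y. L (tp x y) = 0"
  shows "L v = 0"
proof (rule ccontr)
  assume "L v \<noteq> 0"
  then obtain \<phi> where phi: "Vector_Spaces.linear s ((*) :: 'k \<Rightarrow> 'k \<Rightarrow> 'k) \<phi>" "\<phi> (L v) \<noteq> 0"
    using separate[OF vs] by blast
  have vk: "vector_space ((*) :: 'k \<Rightarrow> 'k \<Rightarrow> 'k)" by (rule vs_field)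
  have h: "bilinear_map s1 s2 ((*) :: 'k \<Rightarrow> 'k \<Rightarrow> 'k) (\<lambda>x y. 0)"
    unfolding bilinear_map_def using vs1 vs2 vk by (simp add: Vector_Spaces.linear_iff)
  from tensor h obtain g where uniq: "\<forall>g'. Vector_Spaces.linear s ((*) :: 'k \<Rightarrow> 'k \<Rightarrow> 'k) g' \<and> (\<forall>x y. g' (tp x y) = 0) \<longrightarrow> g' = g"
    unfolding is_tensor_product_def by blast
  have l1: "Vector_Spaces.linear s ((*) :: 'k \<Rightarrow> 'k \<Rightarrow> 'k) (\<phi> \<circ> L)"
    using Vector_Spaces.linear_compose[OF L phi(1)] .
  have "\<phi> 0 = 0" using phi(1) by (intro lin_zero) (simp add: Vector_Spaces.linear_iff)
  then have l2: "\<forall>x y. (\<phi> \<circ> L) (tp x y) = 0" by (simp add: Lz)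
  have l3: "Vector_Spaces.linear s ((*) :: 'k \<Rightarrow> 'k \<Rightarrow> 'k) (\<lambda>_. 0)"
    using vs vk by (simp add: Vector_Spaces.linear_iff)
  have e1: "\<phi> \<circ> L = g" using uniq l1 l2 by blast
  have e2: "(\<lambda>_. 0) = g" using uniq l3 by simp
  have "\<phi> \<circ> L = (\<lambda>_. 0)" using e1 e2 by simp
  then show False using phi(2) by (metis comp_apply)
qed



lemma linD:
  assumes "Vector_Spaces.linear s1 s2 g"
  shows "g (a + b) = g a + g b" and "g (s1 c a) = s2 c (g a)"
proof -
  note L = assms[unfolded Vector_Spaces.linear_iff]
  show "g (a + b) = g a + g b" by (rule L[THEN conjunct2, THEN conjunct2, THEN conjunct1, rule_format])
  show "g (s1 c a) = s2 c (g a)" by (rule L[THEN conjunct2, THEN conjunct2, THEN conjunct2, rule_format])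
qed

lemma linI:
  assumes "vector_space s1" "vector_space s2"
    "\<And>a b. g (a + b) = g a + g b" "\<And>c a. g (s1 c a) = s2 c (g a)"
  shows "Vector_Spaces.linear s1 s2 g"
  unfolding Vector_Spaces.linear_iff using assms by blast

lemma bilD:
  assumes "bilinear_map sa sb sc f"
  shows bil_add1: "f (a + a') y = f a y + f a' y"
    and bil_add2: "f x (b + b') = f x b + f x b'"
    and bil_scale1: "f (sa c a) y = sc c (f a y)"
    and bil_scale2: "f x (sb c b) = sc c (f x b)"
proof -
  have l1: "Vector_Spaces.linear sb sc (f x)" using assms unfolding bilinear_map_def by blast
  have l2: "Vector_Spaces.linear sa sc (\<lambda>a. f a y)" using assms unfolding bilinear_map_def by blast
  show "f (a + a') y = f a y + f a' y" using linD(1)[OF l2] .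
  show "f (sa c a) y = sc c (f a y)" using linD(2)[OF l2] .
  show "f x (b + b') = f x b + f x b'" using linD(1)[OF l1] .
  show "f x (sb c b) = sc c (f x b)" using linD(2)[OF l1] .
qed

lemma bil_more:
  assumes "bilinear_map sa sb sc f"
  shows bil_neg1: "f (- a) y = - f a y" and bil_neg2: "f x (- b) = - f x b"
    and bil_diff1: "f (a - a') y = f a y - f a' y" and bil_diff2: "f x (b - b') = f x b - f x b'"
    and bil_zero1: "f 0 y = 0" and bil_zero2: "f x 0 = 0"
proof -
  note a1 = bil_add1[OF assms] and a2 = bil_add2[OF assms]
  show "f (- a) y = - f a y" by (rule lin_neg[where f="\<lambda>a. f a y"]) (rule a1)
  show "f x (- b) = - f x b" by (rule lin_neg[where f="f x"]) (rule a2)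
  show "f (a - a') y = f a y - f a' y" by (rule lin_diff[where f="\<lambda>a. f a y"]) (rule a1)
  show "f x (b - b') = f x b - f x b'" by (rule lin_diff[where f="f x"]) (rule a2)
  show "f 0 y = 0" by (rule lin_zero[where f="\<lambda>a. f a y"]) (rule a1)
  show "f x 0 = 0" by (rule lin_zero[where f="f x"]) (rule a2)
qed

locale pa =
  fixes sc :: "'k::field \<Rightarrow> 'a::ab_group_add \<Rightarrow> 'a" and m b :: "'a \<Rightarrow> 'a \<Rightarrow> 'a"
  assumes P: "poisson_algebra sc m b"
begin
lemmas PP = P[unfolded poisson_algebra_def]
lemma vs: "vector_space sc" by (rule PP[THEN conjunct1])
lemma mbil: "bilinear_map sc sc sc m" by (rule PP[THEN conjunct2, THEN conjunct1])
lemma massoc: "m (m x y) z = m x (m y z)" by (rule PP[THEN conjunct2, THEN conjunct2, THEN conjunct1, rule_format])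
lemma mcomm: "m x y = m y x" by (rule PP[THEN conjunct2, THEN conjunct2, THEN conjunct2, THEN conjunct1, rule_format])
lemma bbil: "bilinear_map sc sc sc b" by (rule PP[THEN conjunct2, THEN conjunct2, THEN conjunct2, THEN conjunct2, THEN conjunct1])
lemma balt: "b x x = 0" by (rule PP[THEN conjunct2, THEN conjunct2, THEN conjunct2, THEN conjunct2, THEN conjunct2, THEN conjunct1, rule_format])
lemma jac: "b x (b y z) + b y (b z x) + b z (b x y) = 0" by (rule PP[THEN conjunct2, THEN conjunct2, THEN conjunct2, THEN conjunct2, THEN conjunct2, THEN conjunct2, THEN conjunct1, rule_format])
lemma leib: "b x (m y z) = m (b x y) z + m y (b x z)" by (rule PP[THEN conjunct2, THEN conjunct2, THEN conjunct2, THEN conjunct2, THEN conjunct2, THEN conjunct2, THEN conjunct2, rule_format])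
lemma mlc: "m x (m y z) = m y (m x z)" by (simp only: massoc[symmetric] mcomm[of x y])
lemmas mac = massoc mcomm mlc
lemmas lin = bil_add1[OF mbil] bil_add2[OF mbil] bil_neg1[OF mbil] bil_neg2[OF mbil]
  bil_diff1[OF mbil] bil_diff2[OF mbil] bil_zero1[OF mbil] bil_zero2[OF mbil]
  bil_add1[OF bbil] bil_add2[OF bbil] bil_neg1[OF bbil] bil_neg2[OF bbil]
  bil_diff1[OF bbil] bil_diff2[OF bbil] bil_zero1[OF bbil] bil_zero2[OF bbil]
lemma bskew: "b x y = - b y x"
proof -
  have "0 = b (x + y) (x + y)" by (rule balt[symmetric])
  also have "\<dots> = b x x + b y x + (b x y + b y y)" by (simp only: lin)
  also have "\<dots> = b x y + b y x" by (simp add: balt add.commute)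
  finally have "b x y + b y x = 0" by simp
  then show ?thesis by (simp add: eq_neg_iff_add_eq_0)
qed
lemma leib1: "b (m y z) x = m (b y x) z + m y (b z x)"
proof -
  have "b (m y z) x = - b x (m y z)" by (rule bskew)
  also have "... = - (m (b x y) z + m y (b x z))" by (simp add: leib)
  also have "... = m (b y x) z + m y (b z x)"
    by (simp add: bskew[of x y] bskew[of x z] lin)
  finally show ?thesis .
qed
end


locale ts = P1: pa s1 mult1 br1 + P2: pa s2 mult2 br2
  for s1 :: "'k::field \<Rightarrow> 'a::ab_group_add \<Rightarrow> 'a" and mult1 br1
  and s2 :: "'k \<Rightarrow> 'b::ab_group_add \<Rightarrow> 'b" and mult2 br2 +
  fixes s :: "'k \<Rightarrow> 't::ab_group_add \<Rightarrow> 't" and tp :: "'a \<Rightarrow> 'b \<Rightarrow> 't" and mult br :: "'t \<Rightarrow> 't \<Rightarrow> 't"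
  assumes tensor: "is_tensor_product s1 s2 s tp"
    and mult_bil: "bilinear_map s s s mult"
    and br_bil: "bilinear_map s s s br"
    and mult_tp: "\<And>x1 y1 x2 y2. mult (tp x1 y1) (tp x2 y2) = tp (mult1 x1 x2) (mult2 y1 y2)"
    and br_tp: "\<And>x1 y1 x2 y2. br (tp x1 y1) (tp x2 y2) =
                  tp (br1 x1 x2) (mult2 y1 y2) + tp (mult1 x1 x2) (br2 y1 y2)"
begin

lemma vs: "vector_space s"
proof -
  have "Vector_Spaces.linear s s (mult 0)" using mult_bil unfolding bilinear_map_def by blast
  then show ?thesis unfolding Vector_Spaces.linear_iff by (rule conjunct1)
qed

lemma tp_bil: "bilinear_map s1 s2 s tp"
  using tensor unfolding is_tensor_product_def by (rule conjunct1)


lemmas TL = bil_add1[OF tp_bil] bil_add2[OF tp_bil] bil_neg1[OF tp_bil] bil_neg2[OF tp_bil]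
  bil_diff1[OF tp_bil] bil_diff2[OF tp_bil] bil_zero1[OF tp_bil] bil_zero2[OF tp_bil]
lemmas MUL = bil_add1[OF mult_bil] bil_add2[OF mult_bil] bil_neg1[OF mult_bil] bil_neg2[OF mult_bil]
  bil_diff1[OF mult_bil] bil_diff2[OF mult_bil] bil_zero1[OF mult_bil] bil_zero2[OF mult_bil]
  bil_scale1[OF mult_bil] bil_scale2[OF mult_bil]
lemmas BL = bil_add1[OF br_bil] bil_add2[OF br_bil] bil_neg1[OF br_bil] bil_neg2[OF br_bil]
  bil_diff1[OF br_bil] bil_diff2[OF br_bil] bil_zero1[OF br_bil] bil_zero2[OF br_bil]
  bil_scale1[OF br_bil] bil_scale2[OF br_bil]
lemma mods: "module s" using vs by (simp add: module_iff_vector_space)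
lemmas SL = module.scale_right_distrib[OF mods] module.scale_right_diff_distrib[OF mods]
  module.scale_minus_right[OF mods] module.scale_zero_right[OF mods]

lemma tz: assumes "Vector_Spaces.linear s s L" "\<And>x y. L (tp x y) = 0" shows "L v = 0"
  by (rule tensor_zero[OF tensor P1.vs P2.vs vs assms])

lemma ext2:
  assumes l1: "\<And>u. Vector_Spaces.linear s s (F u)"
    and l2: "\<And>v. Vector_Spaces.linear s s (\<lambda>u. F u v)"
    and z: "\<And>x1 y1 x2 y2. F (tp x1 y1) (tp x2 y2) = 0"
  shows "F u v = 0"
proof -
  have a: "F (tp x y) v = 0" for x y v by (rule tz[OF l1]) (rule z)
  show ?thesis by (rule tz[OF l2]) (rule a)
qed

lemma ext3:
  assumes l1: "\<And>u v. Vector_Spaces.linear s s (F u v)"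
    and l2: "\<And>u w. Vector_Spaces.linear s s (\<lambda>v. F u v w)"
    and l3: "\<And>v w. Vector_Spaces.linear s s (\<lambda>u. F u v w)"
    and z: "\<And>x1 y1 x2 y2 x3 y3. F (tp x1 y1) (tp x2 y2) (tp x3 y3) = 0"
  shows "F u v w = 0"
proof -
  have a: "F (tp x1 y1) (tp x2 y2) w = 0" for x1 y1 x2 y2 w by (rule tz[OF l1]) (rule z)
  have b: "F (tp x1 y1) v w = 0" for x1 y1 v w by (rule tz[OF l2]) (rule a)
  show ?thesis by (rule tz[OF l3]) (rule b)
qed

lemma skew_pure: "br (tp x1 y1) (tp x2 y2) + br (tp x2 y2) (tp x1 y1) = 0"
  by (simp add: br_tp P1.bskew[of x2 x1] P2.bskew[of y2 y1] P1.mcomm[of x2 x1] P2.mcomm[of y2 y1] TL)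

lemma Tskew0: "br u v + br v u = 0"
  by (rule ext2[where F="\<lambda>u v. br u v + br v u"])
     ((rule linI[OF vs vs]; simp add: BL SL algebra_simps), (rule linI[OF vs vs]; simp add: BL SL algebra_simps), rule skew_pure)

lemma Tskew: "br u v = - br v u"
  using Tskew0[of u v] by (simp add: eq_neg_iff_add_eq_0)

lemma comm_pure: "mult (tp x1 y1) (tp x2 y2) - mult (tp x2 y2) (tp x1 y1) = 0"
  by (simp add: mult_tp P1.mcomm[of x2 x1] P2.mcomm[of y2 y1])

lemma Tcomm0: "mult u v - mult v u = 0"
  by (rule ext2[where F="\<lambda>u v. mult u v - mult v u"])
     ((rule linI[OF vs vs]; simp add: MUL SL algebra_simps), (rule linI[OF vs vs]; simp add: MUL SL algebra_simps), rule comm_pure)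

lemma Tcomm: "mult u v = mult v u" using Tcomm0[of u v] by simp

lemma assoc_pure: "mult (mult (tp x1 y1) (tp x2 y2)) (tp x3 y3) - mult (tp x1 y1) (mult (tp x2 y2) (tp x3 y3)) = 0"
  by (simp add: mult_tp P1.massoc P2.massoc)

lemma Tassoc0: "mult (mult u v) w - mult u (mult v w) = 0"
  by (rule ext3[where F="\<lambda>u v w. mult (mult u v) w - mult u (mult v w)"])
     ((rule linI[OF vs vs]; simp add: MUL SL algebra_simps), (rule linI[OF vs vs]; simp add: MUL SL algebra_simps),
      (rule linI[OF vs vs]; simp add: MUL SL algebra_simps), rule assoc_pure)

lemma Tassoc: "mult (mult u v) w = mult u (mult v w)" using Tassoc0[of u v w] by simp

lemma leib_pure: "br (tp x1 y1) (mult (tp x2 y2) (tp x3 y3)) -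
   (mult (br (tp x1 y1) (tp x2 y2)) (tp x3 y3) + mult (tp x2 y2) (br (tp x1 y1) (tp x3 y3))) = 0"
  by (simp add: mult_tp br_tp MUL TL P1.leib P2.leib P1.mac P2.mac algebra_simps)

lemma Tleib0: "br u (mult v w) - (mult (br u v) w + mult v (br u w)) = 0"
  by (rule ext3[where F="\<lambda>u v w. br u (mult v w) - (mult (br u v) w + mult v (br u w))"])
     ((rule linI[OF vs vs]; simp add: MUL BL SL algebra_simps), (rule linI[OF vs vs]; simp add: MUL BL SL algebra_simps),
      (rule linI[OF vs vs]; simp add: MUL BL SL algebra_simps), rule leib_pure)

lemma Tleib: "br u (mult v w) = mult (br u v) w + mult v (br u w)" using Tleib0[of u v w] by simp

end

context ts begin

lemma brbr: "br (tp x1 y1) (br (tp x2 y2) (tp x3 y3)) =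
  tp (br1 x1 (br1 x2 x3)) (mult2 y1 (mult2 y2 y3)) + tp (mult1 x1 (br1 x2 x3)) (br2 y1 (mult2 y2 y3))
  + (tp (br1 x1 (mult1 x2 x3)) (mult2 y1 (br2 y2 y3)) + tp (mult1 x1 (mult1 x2 x3)) (br2 y1 (br2 y2 y3)))"
  by (simp add: br_tp BL)

lemma P1jac': "br1 x1 (br1 x2 x3) = br1 x2 (br1 x1 x3) - br1 x3 (br1 x1 x2)"
proof -
  have h: "br1 x1 (br1 x2 x3) + - br1 x2 (br1 x1 x3) + br1 x3 (br1 x1 x2) = 0"
    using P1.jac[of x1 x2 x3] by (simp only: P1.bskew[of x3 x1] P1.lin)
  have "br1 x1 (br1 x2 x3) = br1 x1 (br1 x2 x3) + (- br1 x2 (br1 x1 x3) + br1 x3 (br1 x1 x2)) - (- br1 x2 (br1 x1 x3) + br1 x3 (br1 x1 x2))" by simp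
  also have "\<dots> = 0 - (- br1 x2 (br1 x1 x3) + br1 x3 (br1 x1 x2))" using h by (simp only: add.assoc)
  also have "\<dots> = br1 x2 (br1 x1 x3) - br1 x3 (br1 x1 x2)" by simp
  finally show ?thesis .
qed
lemma P2jac': "br2 x1 (br2 x2 x3) = br2 x2 (br2 x1 x3) - br2 x3 (br2 x1 x2)"
proof -
  have h: "br2 x1 (br2 x2 x3) + - br2 x2 (br2 x1 x3) + br2 x3 (br2 x1 x2) = 0"
    using P2.jac[of x1 x2 x3] by (simp only: P2.bskew[of x3 x1] P2.lin)
  have "br2 x1 (br2 x2 x3) = br2 x1 (br2 x2 x3) + (- br2 x2 (br2 x1 x3) + br2 x3 (br2 x1 x2)) - (- br2 x2 (br2 x1 x3) + br2 x3 (br2 x1 x2))" by simp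
  also have "\<dots> = 0 - (- br2 x2 (br2 x1 x3) + br2 x3 (br2 x1 x2))" using h by (simp only: add.assoc)
  also have "\<dots> = br2 x2 (br2 x1 x3) - br2 x3 (br2 x1 x2)" by simp
  finally show ?thesis .
qed

lemma jac_pure: "br (tp x1 y1) (br (tp x2 y2) (tp x3 y3)) + br (tp x2 y2) (br (tp x3 y3) (tp x1 y1))
   + br (tp x3 y3) (br (tp x1 y1) (tp x2 y2)) = 0"
  unfolding brbr
  by (simp add: P1.leib P2.leib P1.bskew[of x3 x1] P1.bskew[of x2 x1] P1.bskew[of x3 x2]
      P2.bskew[of y3 y1] P2.bskew[of y2 y1] P2.bskew[of y3 y2] P1.lin P2.lin TL
     P1jac'[of x1 x2 x3] P2jac'[of y1 y2 y3] P1.mac P2.mac algebra_simps)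

lemma Tjac: "br u (br v w) + br v (br w u) + br w (br u v) = 0"
  by (rule ext3[where F="\<lambda>u v w. br u (br v w) + br v (br w u) + br w (br u v)"])
     ((rule linI[OF vs vs]; simp add: BL SL algebra_simps), (rule linI[OF vs vs]; simp add: BL SL algebra_simps),
      (rule linI[OF vs vs]; simp add: BL SL algebra_simps), rule jac_pure)

lemma Tleib1: "br (mult y z) x = mult y (br z x) + mult z (br y x)"
proof -
  have "br (mult y z) x = - br x (mult y z)" by (rule Tskew)
  also have "\<dots> = - (mult (br x y) z + mult y (br x z))" by (simp add: Tleib)
  also have "\<dots> = mult y (br z x) + mult z (br y x)"
    by (simp add: Tskew[of x y] Tskew[of x z] MUL Tcomm[of "br y x" z] add.commute)
  finally show ?thesis .
qed

end


lemma nbr_cons: "L \<noteq> [] \<Longrightarrow> nbr br (x # L) = br x (nbr br L)"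
  by (cases L) auto

lemma nbr_app: "ys \<noteq> [] \<Longrightarrow> nbr br (xs @ ys) = foldr br xs (nbr br ys)"
  by (induction xs) (auto simp: nbr_cons)

lemma nbr_snoc: "nbr br (xs @ [z]) = foldr br xs z"
  using nbr_app[of "[z]" br xs] by simp

lemma solve3:
  fixes a b c :: "'t::ab_group_add"
  assumes "a + - b + - c = 0" shows "c = a - b"
proof -
  have "c = (a - b) - (a + - b + - c)" by (simp add: algebra_simps)
  also have "\<dots> = a - b" using assms by simp
  finally show ?thesis .
qed

locale nl =
  fixes br :: "'t::ab_group_add \<Rightarrow> 't \<Rightarrow> 't" and I :: "'t set" and n :: nat
  assumes badd1: "br (a + b) c = br a c + br b c"
    and badd2: "br c (a + b) = br c a + br c b"
    and skew: "br a b = - br b a"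
    and jac3: "br a (br b c) + br b (br c a) + br c (br a b) = 0"
    and I0: "0 \<in> I" and Iadd: "x \<in> I \<Longrightarrow> y \<in> I \<Longrightarrow> x + y \<in> I" and Ineg: "x \<in> I \<Longrightarrow> - x \<in> I"
    and Ibr: "x \<in> I \<Longrightarrow> br y x \<in> I"
    and gen: "length xs = n \<Longrightarrow> i < j \<Longrightarrow> j < n \<Longrightarrow> nbr br xs + nbr br (xs[i := xs ! j, j := xs ! i]) \<in> I"
    and n3: "3 \<le> n"
begin

abbreviation F where "F \<equiv> foldr br"

lemma bneg1: "br (- a) c = - br a c" by (rule lin_neg[where f="\<lambda>a. br a c"]) (rule badd1)
lemma bneg2: "br c (- a) = - br c a" by (rule lin_neg[where f="br c"]) (rule badd2)
lemma bdiff1: "br (a - b) c = br a c - br b c" by (rule lin_diff[where f="\<lambda>a. br a c"]) (rule badd1)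
lemma bdiff2: "br c (a - b) = br c a - br c b" by (rule lin_diff[where f="br c"]) (rule badd2)
lemma bzero2: "br c 0 = 0" by (rule lin_zero[where f="br c"]) (rule badd2)

lemma Fadd: "F P (a + b) = F P a + F P b" by (induction P) (simp_all add: badd2)
lemma Fneg: "F P (- a) = - F P a" by (rule lin_neg[where f="F P"]) (rule Fadd)
lemma Fdiff: "F P (a - b) = F P a - F P b" by (rule lin_diff[where f="F P"]) (rule Fadd)
lemma Fzero: "F P 0 = 0" by (rule lin_zero[where f="F P"]) (rule Fadd)
lemma FI: "a \<in> I \<Longrightarrow> F P a \<in> I" by (induction P) (simp_all add: Ibr)

lemma Idiff: assumes "x \<in> I" "y \<in> I" shows "x - y \<in> I"
proof -
  have "x + - y \<in> I" by (rule Iadd[OF assms(1) Ineg[OF assms(2)]])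
  then show ?thesis by (simp only: diff_conv_add_uminus)
qed

lemma J1: "br (br w x) u = br w (br x u) - br x (br w u)"
proof (rule solve3)
  have "br w (br x u) + br x (br u w) + br u (br w x) = 0" by (rule jac3)
  then show "br w (br x u) + - br x (br w u) + - br (br w x) u = 0"
    by (simp only: skew[of u w] skew[of u "br w x"] bneg2)
qed

lemma C1: "F P (br (br w x) u) = F P (br w (br x u)) - F P (br x (br w u))"
  by (simp add: J1 Fdiff)

lemma RelA: assumes "length P = n - 3"
  shows "F P (br w (br x u)) + F P (br x (br w u)) \<in> I"
proof -
  let ?L = "P @ [w, x, u]"
  have "nbr br ?L + nbr br (?L[length P := ?L ! Suc (length P), Suc (length P) := ?L ! length P]) \<in> I"
    by (rule gen) (use assms n3 in simp_all)
  then show ?thesis by (simp add: nbr_app nth_append list_update_append)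
qed

lemma RelB: assumes "length P = n - 3"
  shows "F P (br a (br b c)) + F P (br c (br b a)) \<in> I"
proof -
  let ?L = "P @ [a, b, c]"
  have "nbr br ?L + nbr br (?L[length P := ?L ! Suc (Suc (length P)), Suc (Suc (length P)) := ?L ! length P]) \<in> I"
    by (rule gen) (use assms n3 in simp_all)
  then show ?thesis by (simp add: nbr_app nth_append list_update_append)
qed

lemma three: assumes "length Q = n - 3"
  shows "F Q (br a (br b c)) + F Q (br a (br b c)) + F Q (br a (br b c)) \<in> I"
proof -
  have r1: "F Q (br a (br b c)) + - F Q (br c (br a b)) \<in> I"
    using RelB[OF assms, of a b c] by (simp add: skew[of b a] bneg2 Fneg)
  have r2: "F Q (br c (br a b)) + - F Q (br b (br c a)) \<in> I"
    using RelB[OF assms, of c a b] by (simp add: skew[of a c] bneg2 Fneg)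
  have j: "F Q (br a (br b c)) + F Q (br b (br c a)) + F Q (br c (br a b)) = 0"
    using arg_cong[OF jac3[of a b c], of "F Q"] by (simp add: Fadd Fzero)
  have "F Q (br a (br b c)) + F Q (br a (br b c)) + F Q (br a (br b c)) =
     (F Q (br a (br b c)) + F Q (br b (br c a)) + F Q (br c (br a b)))
     + (F Q (br a (br b c)) + - F Q (br c (br a b))) + (F Q (br a (br b c)) + - F Q (br c (br a b)))
     + (F Q (br c (br a b)) + - F Q (br b (br c a)))"
    by (simp add: algebra_simps)
  also have "\<dots> \<in> I"
  proof -
    have j': "F Q (br a (br b c)) + F Q (br b (br c a)) + F Q (br c (br a b)) \<in> I" by (subst j) (rule I0)
    show ?thesis by (rule Iadd[OF Iadd[OF Iadd[OF j' r1] r1] r2])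
  qed
  finally show ?thesis .
qed

lemma route1: assumes "length P = n - 3"
  shows "F P (br (br (br w x) y) z) - (F P (br w (br x (br y z))) + F P (br w (br x (br y z)))
     + F P (br w (br x (br y z))) + F P (br w (br x (br y z)))) \<in> I"
proof -
  have a1: "F P (br w (br x (br y z))) + F P (br x (br w (br y z))) \<in> I" by (rule RelA[OF assms])
  have a2: "F P (br (br w x) (br y z)) + F P (br y (br (br w x) z)) \<in> I" by (rule RelA[OF assms])
  have c1: "F P (br (br w x) (br y z)) = F P (br w (br x (br y z))) - F P (br x (br w (br y z)))" by (rule C1)
  have c2: "F P (br (br (br w x) y) z) = F P (br (br w x) (br y z)) - F P (br y (br (br w x) z))" by (rule C1)
  have "F P (br (br (br w x) y) z) - (F P (br w (br x (br y z))) + F P (br w (br x (br y z)))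
     + F P (br w (br x (br y z))) + F P (br w (br x (br y z)))) =
     - (F P (br (br w x) (br y z)) + F P (br y (br (br w x) z)))
     + - (F P (br w (br x (br y z))) + F P (br x (br w (br y z))))
     + - (F P (br w (br x (br y z))) + F P (br x (br w (br y z))))"
    unfolding c2 c1 by (simp add: algebra_simps)
  also have "\<dots> \<in> I" by (rule Iadd[OF Iadd[OF Ineg[OF a2] Ineg[OF a1]] Ineg[OF a1]])
  finally show ?thesis .
qed

lemma route2: assumes "length P = n - 3"
  shows "F P (br (br w (br x y)) z) - (F P (br w (br x (br y z))) + F P (br w (br x (br y z)))
     + F P (br w (br x (br y z))) + F P (br w (br x (br y z)))) \<in> I"
proof -
  obtain h Q where hQ: "P @ [w] = h # Q" by (cases "P @ [w]") auto
  have lQ: "length Q = n - 3" using arg_cong[OF hQ, of length] assms n3 by simp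
  have eqPw: "F P (br w t) = br h (F Q t)" for t
  proof -
    have "F P (br w t) = F (P @ [w]) t" by simp
    also have "\<dots> = br h (F Q t)" by (simp add: hQ)
    finally show ?thesis .
  qed
  have b1: "F Q (br x (br y z)) + F Q (br y (br x z)) \<in> I" by (rule RelA[OF lQ])
  have c3: "F Q (br (br x y) z) = F Q (br x (br y z)) - F Q (br y (br x z))" by (rule C1)
  have "F Q (br (br x y) z) - (F Q (br x (br y z)) + F Q (br x (br y z)))
      = - (F Q (br x (br y z)) + F Q (br y (br x z)))"
    unfolding c3 by (simp add: algebra_simps)
  then have d1: "F Q (br (br x y) z) - (F Q (br x (br y z)) + F Q (br x (br y z))) \<in> I"
    by (rule ssubst[where P="\<lambda>v. v \<in> I", OF _ Ineg[OF b1]])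
  have "F P (br w (br (br x y) z)) - (F P (br w (br x (br y z))) + F P (br w (br x (br y z))))
     = br h (F Q (br (br x y) z) - (F Q (br x (br y z)) + F Q (br x (br y z))))"
    by (simp add: eqPw bdiff2 badd2)
  then have d2: "F P (br w (br (br x y) z)) - (F P (br w (br x (br y z))) + F P (br w (br x (br y z)))) \<in> I"
    by (rule ssubst[where P="\<lambda>v. v \<in> I", OF _ Ibr[OF d1]])
  have b2: "F P (br w (br (br x y) z)) + F P (br (br x y) (br w z)) \<in> I" by (rule RelA[OF assms])
  have c4: "F P (br (br w (br x y)) z) = F P (br w (br (br x y) z)) - F P (br (br x y) (br w z))" by (rule C1)
  have "F P (br (br w (br x y)) z) - (F P (br w (br x (br y z))) + F P (br w (br x (br y z)))
     + F P (br w (br x (br y z))) + F P (br w (br x (br y z)))) =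
     - (F P (br w (br (br x y) z)) + F P (br (br x y) (br w z)))
     + (F P (br w (br (br x y) z)) - (F P (br w (br x (br y z))) + F P (br w (br x (br y z)))))
     + (F P (br w (br (br x y) z)) - (F P (br w (br x (br y z))) + F P (br w (br x (br y z)))))"
    unfolding c4 by (simp add: algebra_simps)
  also have "\<dots> \<in> I" by (rule Iadd[OF Iadd[OF Ineg[OF b2] d2] d2])
  finally show ?thesis .
qed

lemma main: assumes "length P = n - 3"
  shows "F P (br w (br x (br y z))) \<in> I"
proof -
  let ?X = "F P (br w (br x (br y z)))"
  let ?X' = "F P (br x (br w (br y z)))"
  let ?R1 = "F P (br (br (br w x) y) z)"
  let ?R2 = "F P (br (br w (br x y)) z)"
  let ?R2' = "F P (br (br x (br w y)) z)"
  have r1: "?R1 - (?X + ?X + ?X + ?X) \<in> I" by (rule route1[OF assms])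
  have r2: "?R2 - (?X + ?X + ?X + ?X) \<in> I" by (rule route2[OF assms])
  have r3: "?R2' - (?X' + ?X' + ?X' + ?X') \<in> I" by (rule route2[OF assms])
  have jj: "?R1 = ?R2 - ?R2'" by (simp add: J1[of w x y] bdiff1 Fdiff)
  have a: "?X + ?X' \<in> I" by (rule RelA[OF assms])
  have "?R2' = (?R2 - (?X + ?X + ?X + ?X)) - (?R1 - (?X + ?X + ?X + ?X))" unfolding jj by (simp add: algebra_simps)
  then have e1: "?R2' \<in> I" by (rule ssubst[where P="\<lambda>v. v \<in> I", OF _ Idiff[OF r2 r1]])
  have "?X' + ?X' + ?X' + ?X' = ?R2' - (?R2' - (?X' + ?X' + ?X' + ?X'))" by simp
  then have e2: "?X' + ?X' + ?X' + ?X' \<in> I" by (rule ssubst[where P="\<lambda>v. v \<in> I", OF _ Idiff[OF e1 r3]])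
  have "?X + ?X + ?X + ?X = (?X + ?X') + (?X + ?X') + (?X + ?X') + (?X + ?X') - (?X' + ?X' + ?X' + ?X')"
    by (simp add: algebra_simps)
  then have e3: "?X + ?X + ?X + ?X \<in> I" by (rule ssubst[where P="\<lambda>v. v \<in> I", OF _ Idiff[OF Iadd[OF Iadd[OF Iadd[OF a a] a] a] e2]])
  obtain h Q where hQ: "P @ [w] = h # Q" by (cases "P @ [w]") auto
  have lQ: "length Q = n - 3" using arg_cong[OF hQ, of length] assms n3 by simp
  have eqX: "?X = br h (F Q (br x (br y z)))"
  proof -
    have "?X = F (P @ [w]) (br x (br y z))" by simp
    also have "\<dots> = br h (F Q (br x (br y z)))" by (simp add: hQ)
    finally show ?thesis .
  qed
  have "br h (F Q (br x (br y z)) + F Q (br x (br y z)) + F Q (br x (br y z))) \<in> I"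
    by (rule Ibr[OF three[OF lQ]])
  moreover have "?X + ?X + ?X = br h (F Q (br x (br y z)) + F Q (br x (br y z)) + F Q (br x (br y z)))"
    by (simp add: eqX badd2)
  ultimately have e4: "?X + ?X + ?X \<in> I" by simp
  have "?X = (?X + ?X + ?X + ?X) - (?X + ?X + ?X)" by (simp add: algebra_simps)
  then show ?thesis by (rule ssubst[where P="\<lambda>v. v \<in> I", OF _ Idiff[OF e3 e4]])
qed

lemma len4: "length M = 4 \<Longrightarrow> \<exists>a b c d. M = [a, b, c, d]"
  by (auto simp: length_Suc_conv numeral_eq_Suc)

lemma all_n1: assumes "length L = Suc n" shows "nbr br L \<in> I"
proof -
  have "length (drop (n - 3) L) = 4" using assms n3 by simp
  then obtain w x y z where d: "drop (n - 3) L = [w, x, y, z]" using len4 by blast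
  have L: "L = take (n - 3) L @ [w, x, y, z]" using d by (metis append_take_drop_id)
  have lt: "length (take (n - 3) L) = n - 3" using assms n3 by simp
  have "nbr br L = F (take (n - 3) L) (br w (br x (br y z)))"
    by (subst L) (simp add: nbr_app)
  then show ?thesis using main[OF lt] by simp
qed

lemma last_br: assumes "length L = n" "L ! (n - 1) = br a b" shows "nbr br L \<in> I"
proof -
  have ne: "L \<noteq> []" using assms(1) n3 by auto
  have L: "L = butlast L @ [br a b]"
    using ne assms by (metis append_butlast_last_id last_conv_nth)
  have "nbr br L = F (butlast L) (br a b)" by (subst L) (simp add: nbr_snoc)
  also have "\<dots> = nbr br (butlast L @ [a, b])" by (simp add: nbr_app)
  finally have eq: "nbr br L = nbr br (butlast L @ [a, b])" .
  have "length (butlast L @ [a, b]) = Suc n" using assms(1) n3 by simp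
  then show ?thesis using eq all_n1 by simp
qed

lemma entry_br: assumes "length L = n" "i < n" "L ! i = br a b" shows "nbr br L \<in> I"
proof (cases "i = n - 1")
  case True then show ?thesis using last_br assms by simp
next
  case False
  then have ij: "i < n - 1" using assms by simp
  let ?L' = "L[i := L ! (n - 1), n - 1 := L ! i]"
  have g: "nbr br L + nbr br ?L' \<in> I" by (rule gen) (use assms ij in simp_all)
  have "?L' ! (n - 1) = br a b" using assms ij by simp
  moreover have "length ?L' = n" using assms by simp
  ultimately have "nbr br ?L' \<in> I" using last_br by blast
  then have "(nbr br L + nbr br ?L') - nbr br ?L' \<in> I" by (rule Idiff[OF g])
  then show ?thesis by simp
qed

lemma sum_I: "(\<And>i. i < (m::nat) \<Longrightarrow> f i \<in> I) \<Longrightarrow> (\<Sum>i<m. f i) \<in> I"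
  by (induction m) (simp_all add: I0 Iadd)

lemma FI_mod: assumes "length xs = n - 1" "length ys = n"
  shows "nbr br (xs @ [nbr br ys]) - (\<Sum>i<n. nbr br (ys[i := nbr br (xs @ [ys ! i])])) \<in> I"
proof -
  obtain y1 ys' where ys: "ys = y1 # ys'" using assms(2) n3 by (cases ys) auto
  have ys'ne: "ys' \<noteq> []" using ys assms(2) n3 by auto
  obtain x1 xs' where xs: "xs = x1 # xs'" using assms(1) n3 by (cases xs) auto
  have xs'ne: "xs' \<noteq> []" using xs assms(1) n3 by auto
  have "nbr br (xs @ [nbr br ys]) = nbr br (xs @ [y1, nbr br ys'])"
    by (simp add: ys nbr_cons[OF ys'ne] nbr_snoc nbr_app)
  moreover have "length (xs @ [y1, nbr br ys']) = Suc n" using assms n3 by simp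
  ultimately have lhs: "nbr br (xs @ [nbr br ys]) \<in> I" using all_n1 by simp
  have "nbr br (ys[i := nbr br (xs @ [ys ! i])]) \<in> I" if "i < n" for i
  proof (rule entry_br)
    show "length (ys[i := nbr br (xs @ [ys ! i])]) = n" using assms by simp
    show "i < n" by fact
    show "ys[i := nbr br (xs @ [ys ! i])] ! i = br x1 (nbr br (xs' @ [ys ! i]))"
      using that assms by (simp add: xs nbr_cons)
  qed
  then have "(\<Sum>i<n. nbr br (ys[i := nbr br (xs @ [ys ! i])])) \<in> I" by (rule sum_I)
  then show ?thesis by (rule Idiff[OF lhs])
qed

end


lemma desc:
  fixes br :: "'t::ab_group_add \<Rightarrow> 't \<Rightarrow> 't"
  assumes d1: "\<And>a b c. br (a - b) c = br a c - br b c"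
    and d2: "\<And>a b c. br c (a - b) = br c a - br c b"
    and I1: "\<And>x y. x \<in> I \<Longrightarrow> br x y \<in> I" and I2: "\<And>x y. x \<in> I \<Longrightarrow> br y x \<in> I"
    and Ia: "\<And>x y. x \<in> I \<Longrightarrow> y \<in> I \<Longrightarrow> x + y \<in> I"
  shows "length xs = length ys \<Longrightarrow> xs \<noteq> [] \<Longrightarrow> (\<forall>i<length xs. xs ! i - ys ! i \<in> I)
     \<Longrightarrow> nbr br xs - nbr br ys \<in> I"
proof (induction xs arbitrary: ys)
  case Nil then show ?case by simp
next
  case (Cons x xs)
  obtain y ys' where ys: "ys = y # ys'" using Cons.prems(1) by (cases ys) auto
  have xy: "x - y \<in> I" using Cons.prems(3) ys by force
  show ?case
  proof (cases "xs = []")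
    case True
    then have "ys' = []" using Cons.prems(1) ys by simp
    then show ?thesis using True ys xy by simp
  next
    case False
    then have ne: "ys' \<noteq> []" using Cons.prems(1) ys by auto
    have ih: "nbr br xs - nbr br ys' \<in> I"
    proof (rule Cons.IH)
      show "length xs = length ys'" using Cons.prems(1) ys by simp
      show "xs \<noteq> []" by fact
      show "\<forall>i<length xs. xs ! i - ys' ! i \<in> I"
      proof (intro allI impI)
        fix i assume "i < length xs"
        then show "xs ! i - ys' ! i \<in> I" using Cons.prems(3) ys by (metis Suc_less_eq length_Cons nth_Cons_Suc)
      qed
    qed
    have "nbr br (x # xs) - nbr br ys = br (x - y) (nbr br xs) + br y (nbr br xs - nbr br ys')"
      using False ne by (simp add: ys nbr_cons d1 d2 algebra_simps)
    also have "\<dots> \<in> I" by (rule Ia[OF I1[OF xy] I2[OF ih]])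
    finally show ?thesis .
  qed
qed

lemma mlin:
  fixes br :: "'t::ab_group_add \<Rightarrow> 't \<Rightarrow> 't" and s :: "'k \<Rightarrow> 't \<Rightarrow> 't"
  assumes a1: "\<And>a b c. br (a + b) c = br a c + br b c"
    and a2: "\<And>a b c. br c (a + b) = br c a + br c b"
    and s1: "\<And>k a c. br (s k a) c = s k (br a c)"
    and s2: "\<And>k a c. br c (s k a) = s k (br c a)"
  shows "i < length xs \<Longrightarrow> nbr br (xs[i := s k x + y]) = s k (nbr br (xs[i := x])) + nbr br (xs[i := y])"
proof (induction xs arbitrary: i)
  case Nil then show ?case by simp
next
  case (Cons a xs)
  show ?case
  proof (cases i)
    case 0
    then show ?thesis by (cases xs) (simp_all add: a1 s1)
  next
    case (Suc j)
    then have j: "j < length xs" using Cons.prems by simp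
    then have ne: "xs \<noteq> []" by auto
    have "nbr br ((a # xs)[i := s k x + y]) = br a (nbr br (xs[j := s k x + y]))"
      using ne by (simp add: Suc nbr_cons)
    also have "\<dots> = s k (br a (nbr br (xs[j := x]))) + br a (nbr br (xs[j := y]))"
      by (simp add: Cons.IH[OF j] a2 s2)
    also have "\<dots> = s k (nbr br ((a # xs)[i := x])) + nbr br ((a # xs)[i := y])"
      using ne by (simp add: Suc nbr_cons)
    finally show ?thesis .
  qed
qed

theorem proposition4p3:
  fixes s1 :: "'k::field \<Rightarrow> 'a::ab_group_add \<Rightarrow> 'a"
    and s2 :: "'k \<Rightarrow> 'b::ab_group_add \<Rightarrow> 'b"
    and s :: "'k \<Rightarrow> 't::ab_group_add \<Rightarrow> 't"
    and mult1 br1 :: "'a \<Rightarrow> 'a \<Rightarrow> 'a"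
    and mult2 br2 :: "'b \<Rightarrow> 'b \<Rightarrow> 'b"
    and tp :: "'a \<Rightarrow> 'b \<Rightarrow> 't"
    and mult br :: "'t \<Rightarrow> 't \<Rightarrow> 't"
    and n :: nat
  assumes P1: "poisson_algebra s1 mult1 br1"
    and P2: "poisson_algebra s2 mult2 br2"
    and tensor: "is_tensor_product s1 s2 s tp"
    and mult_bil: "bilinear_map s s s mult"
    and br_bil: "bilinear_map s s s br"
    and mult_tp: "\<And>x1 y1 x2 y2. mult (tp x1 y1) (tp x2 y2) = tp (mult1 x1 x2) (mult2 y1 y2)"
    and br_tp: "\<And>x1 y1 x2 y2. br (tp x1 y1) (tp x2 y2) =
                  tp (br1 x1 x2) (mult2 y1 y2) + tp (mult1 x1 x2) (br2 y1 y2)"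
    and n: "n \<ge> 2"
  shows "quotient_is_poisson_nlie s mult (nbr br) n
           (generated_poisson_ideal s mult br (swap_generators n br))"
proof -
  interpret T: ts s1 mult1 br1 s2 mult2 br2 s tp mult br
    by unfold_locales (rule P1 P2 tensor mult_bil br_bil mult_tp br_tp)+
  define I where "I = generated_poisson_ideal s mult br (swap_generators n br)"
  have Isub: "module.subspace s I"
    unfolding I_def generated_poisson_ideal_def
    by (rule module.subspace_Inter[OF T.mods]) (auto simp: poisson_ideal_def)
  have I0: "0 \<in> I" by (rule module.subspace_0[OF T.mods Isub])
  have Iadd: "x \<in> I \<Longrightarrow> y \<in> I \<Longrightarrow> x + y \<in> I" for x y by (rule module.subspace_add[OF T.mods Isub])
  have Ineg: "x \<in> I \<Longrightarrow> - x \<in> I" for x by (rule module.subspace_neg[OF T.mods Isub])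
  have Iclos: "mult y x \<in> I \<and> mult x y \<in> I \<and> br y x \<in> I \<and> br x y \<in> I" if "x \<in> I" for x y
    using that unfolding I_def generated_poisson_ideal_def poisson_ideal_def by blast
  have Igen: "swap_generators n br \<subseteq> I"
    unfolding I_def generated_poisson_ideal_def by blast
  have gen: "nbr br xs + nbr br (xs[i := xs ! j, j := xs ! i]) \<in> I"
    if "length xs = n" "i < j" "j < n" for xs i j
    using Igen that unfolding swap_generators_def by blast
  have mem0: "a = 0 \<Longrightarrow> a \<in> I" for a using I0 by simp
  have Tjac': "br x (br y z) = br (br x y) z + br y (br x z)" for x y z
  proof -
    have "br x (br y z) + br y (br z x) + br z (br x y) = 0" by (rule T.Tjac)
    then have "br x (br y z) + - br y (br x z) + - br (br x y) z = 0"
      by (simp only: T.Tskew[of z x] T.Tskew[of z "br x y"] T.BL)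
    then have "br (br x y) z = br x (br y z) - br y (br x z)" by (rule solve3)
    then show ?thesis by (simp add: algebra_simps)
  qed
  have FI: "nbr br (xs @ [nbr br ys]) - (\<Sum>i<n. nbr br (ys[i := nbr br (xs @ [ys ! i])])) \<in> I"
    if lx: "length xs = n - 1" and ly: "length ys = n" for xs ys
  proof (cases "n = 2")
    case True
    then obtain x where xs: "xs = [x]" using lx True by (auto simp: length_Suc_conv)
    obtain y1 y2 where ys: "ys = [y1, y2]" using ly True by (auto simp: length_Suc_conv numeral_eq_Suc)
    show ?thesis
      by (rule mem0) (simp add: True xs ys numeral_eq_Suc Tjac'[of x y1 y2])
  next
    case False
    then have n3: "3 \<le> n" using n by simp
    interpret N: nl br I n
    proof
      show "br (a + b) c = br a c + br b c" for a b c by (rule T.BL)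
      show "br c (a + b) = br c a + br c b" for a b c by (rule T.BL)
      show "br a b = - br b a" for a b by (rule T.Tskew)
      show "br a (br b c) + br b (br c a) + br c (br a b) = 0" for a b c by (rule T.Tjac)
    qed (use I0 Iadd Ineg Iclos gen n3 in auto)
    show ?thesis by (rule N.FI_mod[OF lx ly])
  qed
  have desc: "nbr br xs - nbr br ys \<in> I"
    if "length xs = length ys" "xs \<noteq> []" "\<forall>i<length xs. xs ! i - ys ! i \<in> I" for xs ys
    by (rule desc[where br=br and I=I, OF T.BL(5) T.BL(6) _ _ Iadd that]) (use Iclos in auto)
  show ?thesis
    unfolding quotient_is_poisson_nlie_def I_def[symmetric]
  proof (intro conjI allI impI ballI)
    show "module.subspace s I" by (rule Isub)
    show "mult y x \<in> I" "mult x y \<in> I" if "x \<in> I" for x y using Iclos[OF that] by auto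
    show "mult (s c x + y) z - (s c (mult x z) + mult y z) \<in> I" for c x y z by (rule mem0) (simp add: T.MUL)
    show "mult z (s c x + y) - (s c (mult z x) + mult z y) \<in> I" for c x y z by (rule mem0) (simp add: T.MUL)
    show "mult (mult x y) z - mult x (mult y z) \<in> I" for x y z by (rule mem0) (simp only: T.Tassoc diff_self)
    show "mult x y - mult y x \<in> I" for x y by (rule mem0) (simp only: T.Tcomm[of x y] diff_self)
    show "nbr br xs - nbr br ys \<in> I"
      if "length xs = n \<and> length ys = n \<and> (\<forall>i<n. xs ! i - ys ! i \<in> I)" for xs ys
    proof (rule desc)
      show "length xs = length ys" using that by simp
      show "xs \<noteq> []" using that n by auto
      show "\<forall>i<length xs. xs ! i - ys ! i \<in> I" using that by simp
    qed
    show "nbr br (xs[i := s c x + y]) - (s c (nbr br (xs[i := x])) + nbr br (xs[i := y])) \<in> I"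
      if "length xs = n \<and> i < n" for xs i c x y
    proof (rule mem0)
      have "i < length xs" using that by simp
      then have "nbr br (xs[i := s c x + y]) = s c (nbr br (xs[i := x])) + nbr br (xs[i := y])"
        by (rule mlin[where br=br and s=s, OF T.BL(1) T.BL(2) T.BL(9) T.BL(10)])
      then show "nbr br (xs[i := s c x + y]) - (s c (nbr br (xs[i := x])) + nbr br (xs[i := y])) = 0"
        by (simp only: diff_self)
    qed
    show "nbr br (xs[i := xs ! j, j := xs ! i]) + nbr br xs \<in> I"
      if "length xs = n \<and> i < j \<and> j < n" for xs i j
    proof -
      from that have "length xs = n" "i < j" "j < n" by simp_all
      then have "nbr br xs + nbr br (xs[i := xs ! j, j := xs ! i]) \<in> I" by (rule gen)
      then show ?thesis by (simp only: add.commute[of "nbr br xs" "nbr br (xs[i := xs ! j, j := xs ! i])"])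
    qed
    show "nbr br (xs @ [nbr br ys]) - (\<Sum>i<n. nbr br (ys[i := nbr br (xs @ [ys ! i])])) \<in> I"
      if "length xs = n - 1 \<and> length ys = n" for xs ys
    proof -
      from that have "length xs = n - 1" "length ys = n" by simp_all
      then show ?thesis by (rule FI)
    qed
    show "nbr br (mult y z # xs) - (mult y (nbr br (z # xs)) + mult z (nbr br (y # xs))) \<in> I"
      if "length xs = n - 1" for y z xs
    proof (rule mem0)
      have "xs \<noteq> []" using that n by auto
      then show "nbr br (mult y z # xs) - (mult y (nbr br (z # xs)) + mult z (nbr br (y # xs))) = 0"
        by (simp add: nbr_cons T.Tleib1)
    qed
  qed
qed

end
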